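(* Let $d\ge3$, $h\ge1$. The exponent $\exp(d,h)$ of $G(d,h)$ divides $$(d-1)^h\cdot\operatorname{lcm}\{d\,\theta(d,h+1),\ \theta(d,h),\ \theta(d,h-1),\dots,\theta(d,2)\},$$ where $\theta(d,n):=\frac{(d-1)^n-1}{d-2}$.
   Context: Let $\mathcal{T}(d,h)$ be the rooted tree in which the root $0$ has $d$ children, every vertex at distance $1,\dots,h-1$ from the root has $d-1$ children, and the vertices at distance $h$ are leaves. Let $V$ be its vertex set, $A$ its adjacency matrix, $\Delta := dI-A$, and $\Lambda\subset\mathbb{Z}^V$ the lattice spanned by the rows of $\Delta$. Then $G(d,h):=\mathbb{Z}^V/\Lambda$. The exponent is the least common multiple of the orders of the elements. *)

theory Defs
  imports Main
begin

text \<open>Vertices of T(d,h): the root is the empty list; a vertex at depth k is the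
list of child indices along the path from the root.\<close>
definition tvert :: "nat \<Rightarrow> nat \<Rightarrow> nat list set" where
  "tvert d h = {xs. length xs \<le> h \<and>
      (\<forall>i<length xs. xs ! i < (if i = 0 then d else d - 1))}"

definition tadj :: "nat list \<Rightarrow> nat list \<Rightarrow> bool" where
  "tadj x y \<longleftrightarrow> (\<exists>c. y = x @ [c]) \<or> (\<exists>c. x = y @ [c])"

definition lap_row :: "nat \<Rightarrow> nat \<Rightarrow> nat list \<Rightarrow> nat list \<Rightarrow> int" where
  "lap_row d h v = (\<lambda>w. if w \<in> tvert d h then
      (if w = v then int d else if tadj v w then -1 else 0) else 0)"

text \<open>Z^V, realised as integer functions on vertex lists supported on V.\<close>
definition ZV :: "nat \<Rightarrow> nat \<Rightarrow> (nat list \<Rightarrow> int) set" where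
  "ZV d h = {f. \<forall>w. w \<notin> tvert d h \<longrightarrow> f w = 0}"

definition lap_lattice :: "nat \<Rightarrow> nat \<Rightarrow> (nat list \<Rightarrow> int) set" where
  "lap_lattice d h = {f. \<exists>c :: nat list \<Rightarrow> int.
      f = (\<lambda>w. \<Sum>v\<in>tvert d h. c v * lap_row d h v w)}"

text \<open>Order of the class of f in G(d,h) = Z^V / Lambda (0 if infinite order).\<close>
definition elem_order :: "nat \<Rightarrow> nat \<Rightarrow> (nat list \<Rightarrow> int) \<Rightarrow> nat" where
  "elem_order d h f =
     (if \<exists>k>0. (\<lambda>w. int k * f w) \<in> lap_lattice d h
      then LEAST k. k > 0 \<and> (\<lambda>w. int k * f w) \<in> lap_lattice d h else 0)"

definition group_exponent :: "nat \<Rightarrow> nat \<Rightarrow> nat" where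
  "group_exponent d h = Lcm (elem_order d h ` ZV d h)"

definition theta :: "nat \<Rightarrow> nat \<Rightarrow> nat" where
  "theta d n = ((d - 1) ^ n - 1) div (d - 2)"

end

theory Submission
  imports Defs "HOL-Library.Sublist"
begin

fun th :: "nat \<Rightarrow> nat \<Rightarrow> int" where
  "th d 0 = 0"
| "th d (Suc n) = (int d - 1) * th d n + 1"

lemma th_closed: "(int d - 2) * th d n = (int d - 1)^n - 1"
proof (induction n)
  case 0 then show ?case by simp
next
  case (Suc n)
  have "(int d - 2) * th d (Suc n) = (int d - 1) * ((int d - 2) * th d n) + (int d - 2)"
    by (simp add: algebra_simps)
  also have "\<dots> = (int d - 1) * ((int d - 1)^n - 1) + (int d - 2)" using Suc by simp
  also have "\<dots> = (int d - 1)^Suc n - 1" by (simp add: algebra_simps)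
  finally show ?case .
qed

lemma theta_eq: assumes "d \<ge> 3" shows "int (theta d n) = th d n"
proof -
  have p: "1 \<le> (d - 1) ^ n" using assms by simp
  have "int (theta d n) = int ((d - 1) ^ n - 1) div int (d - 2)"
    unfolding theta_def by (simp add: zdiv_int)
  also have "int ((d - 1) ^ n - 1) = (int d - 1)^n - 1"
    using p assms by (simp add: of_nat_diff)
  also have "int (d - 2) = int d - 2" using assms by simp
  also have "((int d - 1)^n - 1) div (int d - 2) = th d n"
  proof -
    have "int d - 2 \<noteq> 0" using assms by simp
    then show ?thesis unfolding th_closed[of d n, symmetric] by simp
  qed
  finally show ?thesis .
qed

lemma th_nonneg: "d \<ge> 1 \<Longrightarrow> th d n \<ge> 0"
  by (induction n) auto

lemma th_pos: "d \<ge> 1 \<Longrightarrow> n \<ge> 1 \<Longrightarrow> th d n \<ge> 1"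
  by (cases n) (auto simp: th_nonneg)

lemma th_rec: "int d * th d (Suc n) = th d (Suc (Suc n)) + (int d - 1) * th d n"
  by (simp add: algebra_simps)

lemma th_diff: "th d (Suc (Suc n)) - th d n = int d * (int d - 1)^n"
proof -
  have "th d (Suc (Suc n)) - th d n = int d * ((int d - 2) * th d n + 1)"
    by (simp add: algebra_simps)
  then show ?thesis by (simp add: th_closed)
qed

lemma th_coprime: "coprime (th d (Suc n)) (th d n)"
proof (rule coprimeI)
  fix c assume a: "c dvd th d (Suc n)" "c dvd th d n"
  have "c dvd (int d - 1) * th d n" using a(2) by (rule dvd_mult)
  then have "c dvd th d (Suc n) - (int d - 1) * th d n" using a(1) dvd_diff by blast
  moreover have "th d (Suc n) - (int d - 1) * th d n = 1" by simp
  ultimately show "is_unit c" by metis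
qed

definition bnd :: "nat \<Rightarrow> nat list \<Rightarrow> nat" where
  "bnd d u = (if u = [] then d else d - 1)"

lemma tvert_snoc:
  "(u @ [c] \<in> tvert d h) \<longleftrightarrow> (u \<in> tvert d h \<and> length u < h \<and> c < bnd d u)"
proof
  assume a: "u @ [c] \<in> tvert d h"
  then have l: "length u < h" by (simp add: tvert_def)
  have b: "\<forall>i<Suc (length u). (u @ [c]) ! i < (if i = 0 then d else d - 1)"
    using a by (simp add: tvert_def)
  have "\<forall>i<length u. u ! i < (if i = 0 then d else d - 1)"
  proof (intro allI impI)
    fix i assume "i < length u"
    then show "u ! i < (if i = 0 then d else d - 1)" using b[rule_format, of i]
      by (simp add: nth_append)
  qed
  moreover have "c < bnd d u" using b[rule_format, of "length u"] by (simp add: bnd_def)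
  ultimately show "u \<in> tvert d h \<and> length u < h \<and> c < bnd d u"
    using l by (simp add: tvert_def)
next
  assume a: "u \<in> tvert d h \<and> length u < h \<and> c < bnd d u"
  have "\<forall>i<Suc (length u). (u @ [c]) ! i < (if i = 0 then d else d - 1)"
  proof (intro allI impI)
    fix i assume i: "i < Suc (length u)"
    show "(u @ [c]) ! i < (if i = 0 then d else d - 1)"
    proof (cases "i < length u")
      case True then show ?thesis using a by (simp add: tvert_def nth_append)
    next
      case False then have "i = length u" using i by simp
      then show ?thesis using a by (simp add: bnd_def)
    qed
  qed
  then show "u @ [c] \<in> tvert d h" using a by (simp add: tvert_def)
qed

lemma tvert_butlast: "u \<in> tvert d h \<Longrightarrow> butlast u \<in> tvert d h"
  by (auto simp: tvert_def nth_butlast)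

lemma tvert_len: "u \<in> tvert d h \<Longrightarrow> length u \<le> h"
  by (simp add: tvert_def)

lemma Nil_tvert: "[] \<in> tvert d h"
  by (simp add: tvert_def)

lemma finite_tvert: "finite (tvert d h)"
proof -
  have "tvert d h \<subseteq> {xs. set xs \<subseteq> {..<d} \<and> length xs \<le> h}"
  proof
    fix xs assume a: "xs \<in> tvert d h"
    have "set xs \<subseteq> {..<d}"
    proof
      fix x assume "x \<in> set xs"
      then obtain i where "i < length xs" "xs ! i = x" by (auto simp: in_set_conv_nth)
      then show "x \<in> {..<d}" using a unfolding tvert_def
        by (auto split: if_splits)
    qed
    then show "xs \<in> {xs. set xs \<subseteq> {..<d} \<and> length xs \<le> h}" using a by (simp add: tvert_def)
  qed
  then show ?thesis using finite_lists_length_le[of "{..<d}" h] finite_subset by blast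
qed

lemma tadj_refl: "\<not> tadj u u"
  by (auto simp: tadj_def)

lemma nbrs:
  assumes "u \<in> tvert d h"
  shows "{v \<in> tvert d h. tadj v u} = (if u = [] then {} else {butlast u}) \<union>
          (if length u < h then (\<lambda>c. u @ [c]) ` {..<bnd d u} else {})"
proof (rule set_eqI)
  fix v
  show "v \<in> {v \<in> tvert d h. tadj v u} \<longleftrightarrow> v \<in> (if u = [] then {} else {butlast u}) \<union>
          (if length u < h then (\<lambda>c. u @ [c]) ` {..<bnd d u} else {})"
  proof
    assume "v \<in> {v \<in> tvert d h. tadj v u}"
    then have v: "v \<in> tvert d h" "tadj v u" by auto
    then consider c where "u = v @ [c]" | c where "v = u @ [c]" unfolding tadj_def by blast
    then show "v \<in> (if u = [] then {} else {butlast u}) \<union>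
          (if length u < h then (\<lambda>c. u @ [c]) ` {..<bnd d u} else {})"
    proof cases
      case 1 then show ?thesis by simp
    next
      case (2 c) then show ?thesis using v(1) tvert_snoc[of u c d h] by auto
    qed
  next
    assume a: "v \<in> (if u = [] then {} else {butlast u}) \<union>
          (if length u < h then (\<lambda>c. u @ [c]) ` {..<bnd d u} else {})"
    then consider "u \<noteq> []" "v = butlast u" | c where "length u < h" "c < bnd d u" "v = u @ [c]"
      by (auto split: if_splits)
    then show "v \<in> {v \<in> tvert d h. tadj v u}"
    proof cases
      case 1
      then have "u = v @ [last u]" by simp
      then show ?thesis using 1 assms tvert_butlast unfolding tadj_def by blast
    next
      case 2 then show ?thesis using assms tvert_snoc unfolding tadj_def by blast
    qed
  qed
qed

definition lat :: "nat \<Rightarrow> nat \<Rightarrow> (nat list \<Rightarrow> int) \<Rightarrow> nat list \<Rightarrow> int" where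
  "lat d h c = (\<lambda>w. \<Sum>v\<in>tvert d h. c v * lap_row d h v w)"

lemma lat_formula:
  "lat d h c u = (if u \<in> tvert d h then int d * c u - (if u = [] then 0 else c (butlast u))
      - (if length u < h then (\<Sum>x<bnd d u. c (u @ [x])) else 0) else 0)"
proof (cases "u \<in> tvert d h")
  case False then show ?thesis by (simp add: lat_def lap_row_def)
next
  case True
  have "lat d h c u = (\<Sum>v\<in>tvert d h. (if u = v then int d * c v else 0) - (if tadj v u then c v else 0))"
    unfolding lat_def lap_row_def using True tadj_refl[of u]
    by (intro sum.cong) (auto simp: tadj_def)
  also have "\<dots> = int d * c u - (\<Sum>v\<in>{v \<in> tvert d h. tadj v u}. c v)"
    using True finite_tvert[of d h]
    by (simp add: sum_subtractf sum.inter_filter)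
  also have "(\<Sum>v\<in>{v \<in> tvert d h. tadj v u}. c v) = (if u = [] then 0 else c (butlast u))
      + (if length u < h then (\<Sum>x<bnd d u. c (u @ [x])) else 0)"
  proof -
    have disj: "(if u = [] then {} else {butlast u}) \<inter>
          (if length u < h then (\<lambda>c. u @ [c]) ` {..<bnd d u} else {}) = {}"
      by (auto dest!: arg_cong[of _ _ length])
    have inj: "inj_on (\<lambda>c. u @ [c]) {..<bnd d u}" by (auto simp: inj_on_def)
    show ?thesis unfolding nbrs[OF True]
      by (subst sum.union_disjoint) (use disj inj in \<open>auto simp: sum.reindex\<close>)
  qed
  finally show ?thesis using True by simp
qed

definition psi :: "nat \<Rightarrow> nat \<Rightarrow> nat list \<Rightarrow> nat list \<Rightarrow> int" where
  "psi d h w = (\<lambda>u. if u \<in> tvert d h \<and> prefix w u then th d (h + 1 - length u) else 0)"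

lemma lat_psi:
  assumes d: "d \<ge> 3" and w: "w \<in> tvert d h"
  shows "lat d h (psi d h w) u = th d (h + 2 - length w) * (if u = w then 1 else 0)
     - (if w \<noteq> [] then th d (h + 1 - length w) * (if u = butlast w then 1 else 0)
        else th d h * (if u = [] then 1 else 0))"
proof (cases "u \<in> tvert d h")
  case False
  then have "u \<noteq> w" "u \<noteq> butlast w" "u \<noteq> []" using w tvert_butlast Nil_tvert by metis+
  then show ?thesis using False by (simp add: lat_formula)
next
  case True
  define l where "l = length u"
  define n where "n = h - l"
  have lh: "l \<le> h" using tvert_len[OF True] l_def by simp
  have ch: "psi d h w (u @ [x]) = (if prefix w (u @ [x]) then th d n else 0)"
    if "length u < h" "x < bnd d u" for x
    using that True tvert_snoc[of u x d h] unfolding psi_def n_def l_def by simp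
  have bi: "int (bnd d u) = (if u = [] then int d else int d - 1)"
    using d by (simp add: bnd_def)
  have L: "lat d h (psi d h w) u = int d * psi d h w u - (if u = [] then 0 else psi d h w (butlast u))
      - (if length u < h then (\<Sum>x<bnd d u. psi d h w (u @ [x])) else 0)"
    using True by (simp add: lat_formula)
  show ?thesis
  proof (cases "prefix w u")
    case pre: True
    have S: "(if length u < h then (\<Sum>x<bnd d u. psi d h w (u @ [x])) else 0) = int (bnd d u) * th d n"
    proof (cases "length u < h")
      case True
      then have "(\<Sum>x<bnd d u. psi d h w (u @ [x])) = (\<Sum>x<bnd d u. th d n)"
        using ch pre by (intro sum.cong) auto
      then show ?thesis using True by simp
    next
      case False then have "n = 0" using n_def l_def lh by simp
      then show ?thesis using False by simp
    qed
    have P: "(if u = [] then 0 else psi d h w (butlast u)) = (if u = w then 0 else th d (Suc (Suc n)))"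
    proof (cases "u = w")
      case True
      have "\<not> prefix w (butlast w)" if "w \<noteq> []"
      proof
        assume "prefix w (butlast w)"
        then have "length w \<le> length (butlast w)" by (rule prefix_length_le)
        moreover have "length w > 0" using that by simp
        ultimately show False by (simp only: length_butlast)
      qed
      then show ?thesis using True by (auto simp: psi_def)
    next
      case False
      then have ne: "u \<noteq> []" using pre by auto
      have "u = butlast u @ [last u]" using ne by simp
      then have "prefix w (butlast u @ [last u])" using pre by simp
      then have "w = butlast u @ [last u] \<or> prefix w (butlast u)" by (simp del: append_butlast_last_id)
      then have "prefix w (butlast u)" using False ne append_butlast_last_id[OF ne] by metis
      moreover have "h + 1 - length (butlast u) = Suc (Suc n)"
        using ne lh unfolding n_def l_def by (cases u) auto
      ultimately show ?thesis using False ne tvert_butlast[OF True] by (simp add: psi_def)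
    qed
    have pu: "psi d h w u = th d (Suc n)"
      using True pre lh unfolding psi_def n_def l_def by (simp add: Suc_diff_le)
    have val: "lat d h (psi d h w) u = (if u = w then th d (Suc (Suc n)) else 0)
        - (if u = [] then th d n else 0)"
      unfolding L S P pu bi using th_rec[of d n] by (auto simp: algebra_simps)
    show ?thesis
    proof (cases "u = w")
      case True
      then have "Suc (Suc n) = h + 2 - length w" using lh n_def l_def by simp
      moreover have "w \<noteq> [] \<Longrightarrow> w \<noteq> butlast w" by (cases w rule: rev_cases) auto
      ultimately show ?thesis using val True n_def l_def by auto
    next
      case False
      have "u \<noteq> butlast w"
        using pre prefix_length_le[of w u] False by (cases w) auto
      moreover have "u \<noteq> []" using False pre by auto
      ultimately show ?thesis using val False by auto
    qed
  next
    case npre: False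
    have P: "(if u = [] then 0 else psi d h w (butlast u)) = 0"
      using npre prefix_order.trans[OF _ prefixeq_butlast[of u], of w] by (auto simp: psi_def)
    have pu: "psi d h w u = 0" using npre by (simp add: psi_def)
    have S: "(if length u < h then (\<Sum>x<bnd d u. psi d h w (u @ [x])) else 0)
        = (if w \<noteq> [] \<and> u = butlast w then th d n else 0)"
    proof (cases "w \<noteq> [] \<and> u = butlast w")
      case True
      then have wu: "w = u @ [last w]" by simp
      then have lw: "length u < h" "last w < bnd d u" using w tvert_snoc[of u "last w" d h] by auto
      have "(\<Sum>x<bnd d u. psi d h w (u @ [x])) = (\<Sum>x<bnd d u. if x = last w then th d n else 0)"
        using ch lw npre by (intro sum.cong) (auto, (metis wu)+)
      then show ?thesis using True lw by simp
    next
      case False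
      have "psi d h w (u @ [x]) = 0" if "length u < h" "x < bnd d u" for x
        using ch[OF that] npre False by auto
      then have z: "length u < h \<Longrightarrow> (\<Sum>x<bnd d u. psi d h w (u @ [x])) = 0" by simp
      have rhs: "(if w \<noteq> [] \<and> u = butlast w then th d n else 0) = 0" using False by auto
      show ?thesis unfolding rhs using z by simp
    qed
    have "lat d h (psi d h w) u = - (if w \<noteq> [] \<and> u = butlast w then th d n else 0)"
      unfolding L S P pu by simp
    moreover have "u \<noteq> w" using npre by auto
    moreover have "w \<noteq> []" using npre by auto
    moreover have "u = butlast w \<Longrightarrow> n = h + 1 - length w"
    proof -
      assume "u = butlast w"
      moreover have "length w > 0" using \<open>w \<noteq> []\<close> by simp
      moreover have "n = h - (length w - 1)" using n_def l_def calculation(1) by simp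
      ultimately show ?thesis by presburger
    qed
    ultimately show ?thesis by auto
  qed
qed

definition good :: "nat \<Rightarrow> nat \<Rightarrow> int \<Rightarrow> nat list \<Rightarrow> bool" where
  "good d h n u \<longleftrightarrow> (\<exists>c. lat d h c = (\<lambda>v. n * (if v = u then 1 else 0)))"

lemma lat_lin: "lat d h (\<lambda>v. a * c1 v + c2 v) w = a * lat d h c1 w + lat d h c2 w"
  unfolding lat_def by (simp add: algebra_simps sum.distrib sum_distrib_left)

lemma lat_scale: "lat d h (\<lambda>v. a * c1 v) w = a * lat d h c1 w"
  unfolding lat_def by (simp add: algebra_simps sum_distrib_left)

lemma good_mult: "good d h n u \<Longrightarrow> good d h (k * n) u"
proof -
  assume "good d h n u"
  then obtain c where c: "lat d h c = (\<lambda>v. n * (if v = u then 1 else 0))" unfolding good_def by blast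
  have "lat d h (\<lambda>v. k * c v) = (\<lambda>v. (k * n) * (if v = u then 1 else 0))"
    by (rule ext) (simp add: lat_scale c)
  then show ?thesis unfolding good_def by blast
qed

lemma good_root: assumes "d \<ge> 3" shows "good d h (int d * (int d - 1) ^ h) []"
proof -
  have "lat d h (psi d h []) = (\<lambda>v. (int d * (int d - 1) ^ h) * (if v = [] then 1 else 0))"
  proof (rule ext)
    fix v
    have "th d (h + 2) - th d h = int d * (int d - 1) ^ h"
      using th_diff[of d h] by (simp add: numeral_2_eq_2)
    then show "lat d h (psi d h []) v = (int d * (int d - 1) ^ h) * (if v = [] then 1 else 0)"
      using lat_psi[OF assms Nil_tvert, of h v] by (simp add: algebra_simps)
  qed
  then show ?thesis unfolding good_def by blast
qed

lemma good_step:
  assumes d: "d \<ge> 3" and w: "w \<in> tvert d h" "w \<noteq> []"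
    and g: "good d h (c * th d (h + 1 - length w)) (butlast w)"
  shows "good d h (c * th d (h + 2 - length w)) w"
proof -
  obtain c' where c': "lat d h c' = (\<lambda>v. (c * th d (h + 1 - length w)) * (if v = butlast w then 1 else 0))"
    using g unfolding good_def by blast
  have "lat d h (\<lambda>v. c * psi d h w v + c' v) = (\<lambda>v. (c * th d (h + 2 - length w)) * (if v = w then 1 else 0))"
  proof (rule ext)
    fix v
    show "lat d h (\<lambda>v. c * psi d h w v + c' v) v = (c * th d (h + 2 - length w)) * (if v = w then 1 else 0)"
      unfolding lat_lin c' lat_psi[OF d w(1)] using w(2) by (simp add: algebra_simps)
  qed
  then show ?thesis unfolding good_def by blast
qed

lemma main_ind:
  fixes Md D :: int
  assumes d: "d \<ge> 3" and Ddef: "D = int d * (int d - 1) ^ h"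
    and hD: "D * th d (h + 1) dvd Md"
    and hT: "\<And>m. 2 \<le> m \<Longrightarrow> m \<le> h + 1 \<Longrightarrow> th d m dvd Md"
  shows "\<forall>u\<in>tvert d h. length u = j \<longrightarrow> (\<forall>n. (if j = 0 then D dvd n
           else (Md dvd n * th d (h + 1 - j) \<and> th d (h + 2 - j) dvd n)) \<longrightarrow> good d h n u)"
proof (induction j)
  case 0
  show ?case
  proof (intro ballI impI allI)
    fix u n assume "u \<in> tvert d h" "length u = 0"
      "(if (0::nat) = 0 then D dvd n else (Md dvd n * th d (h + 1 - 0) \<and> th d (h + 2 - 0) dvd n))"
    then have "u = []" "D dvd n" by auto
    then obtain k where "n = k * D" by (metis dvd_def mult.commute)
    then show "good d h n u" using good_mult[OF good_root[OF d], of h k] \<open>u = []\<close> Ddef by simp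
  qed
next
  case (Suc j)
  show ?case
  proof (intro ballI impI allI)
    fix u n assume u: "u \<in> tvert d h" "length u = Suc j"
      and hn: "(if Suc j = 0 then D dvd n
           else (Md dvd n * th d (h + 1 - Suc j) \<and> th d (h + 2 - Suc j) dvd n))"
    have jh: "Suc j \<le> h" using tvert_len[OF u(1)] u(2) by simp
    have e1: "h + 1 - Suc j = h - j" "h + 2 - Suc j = Suc (h - j)" using jh by auto
    have hn1: "Md dvd n * th d (h - j)" and hn2: "th d (Suc (h - j)) dvd n" using hn e1 by auto
    obtain c where c: "n = th d (Suc (h - j)) * c" using hn2 by (auto elim: dvdE)
    have une: "u \<noteq> []" using u(2) by auto
    have p: "butlast u \<in> tvert d h" "length (butlast u) = j" using u tvert_butlast by auto
    have thpos: "th d m \<noteq> 0" if "m \<ge> 1" for m using th_pos[of d m] that d by simp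
    have IH: "\<forall>n. (if j = 0 then D dvd n
           else (Md dvd n * th d (h + 1 - j) \<and> th d (h + 2 - j) dvd n)) \<longrightarrow> good d h n (butlast u)"
      using Suc.IH p by blast
    have "good d h (c * th d (h - j)) (butlast u)"
    proof (cases "j = 0")
      case True
      have "D * th d (h + 1) dvd n * th d h" using hD hn1 True dvd_trans by auto
      then have "D * th d (Suc h) dvd (c * th d h) * th d (Suc h)"
        using c True by (simp add: algebra_simps)
      then have "D dvd c * th d h" using thpos[of "Suc h"] by simp
      then show ?thesis using IH True by simp
    next
      case False
      have a1: "Md dvd (c * th d (h - j)) * th d (h + 1 - j)"
        using hn1 c jh by (simp add: algebra_simps Suc_diff_le)
      have m: "h + 2 - j = Suc (Suc (h - j))" "h + 1 - j = Suc (h - j)" using jh by auto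
      have "th d (Suc (Suc (h - j))) dvd Md" using hT[of "Suc (Suc (h - j))"] False jh by auto
      then have "th d (Suc (Suc (h - j))) dvd th d (Suc (h - j)) * (c * th d (h - j))"
        using hn1 c dvd_trans by (metis mult.assoc mult.commute)
      then have "th d (Suc (Suc (h - j))) dvd c * th d (h - j)"
        using th_coprime[of d "Suc (h - j)"] by (simp add: coprime_dvd_mult_right_iff)
      then have "th d (h + 2 - j) dvd c * th d (h - j)" using m by simp
      then show ?thesis using IH False a1 by simp
    qed
    then have "good d h (c * th d (h + 2 - length u)) u"
      using good_step[OF d u(1) une] p(2) u(2) e1 by (simp add: length_butlast)
    then show "good d h n u" using c u(2) e1 by (simp add: mult.commute)
  qed
qed

lemma lat_sum: "lat d h (\<lambda>v. \<Sum>u\<in>A. a u * C u v) w = (\<Sum>u\<in>A. a u * lat d h (C u) w)"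
  unfolding lat_def by (simp add: sum_distrib_left sum_distrib_right mult.assoc sum.swap[of _ A])

lemma lattice_eq: "lap_lattice d h = range (lat d h)"
  unfolding lap_lattice_def lat_def by auto

lemma lattice_diff: "f \<in> lap_lattice d h \<Longrightarrow> g \<in> lap_lattice d h \<Longrightarrow>
    (\<lambda>w. f w - q * g w) \<in> lap_lattice d h"
proof -
  assume "f \<in> lap_lattice d h" "g \<in> lap_lattice d h"
  then obtain c1 c2 where "f = lat d h c1" "g = lat d h c2" unfolding lattice_eq by auto
  then have "(\<lambda>w. f w - q * g w) = lat d h (\<lambda>v. (-q) * c2 v + c1 v)"
  proof -
    assume fg: "f = lat d h c1" "g = lat d h c2"
    show ?thesis
    proof (rule ext)
      fix w show "f w - q * g w = lat d h (\<lambda>v. (-q) * c2 v + c1 v) w"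
        unfolding lat_lin fg by simp
    qed
  qed
  then show ?thesis unfolding lattice_eq by auto
qed

lemma order_dvd:
  assumes M: "M > 0" and inM: "(\<lambda>w. int M * f w) \<in> lap_lattice d h"
  shows "elem_order d h f dvd M"
proof -
  have ex: "\<exists>k>0. (\<lambda>w. int k * f w) \<in> lap_lattice d h" using M inM by blast
  define k0 where "k0 = (LEAST k. k > 0 \<and> (\<lambda>w. int k * f w) \<in> lap_lattice d h)"
  have eo: "elem_order d h f = k0" unfolding elem_order_def k0_def using ex by simp
  have k0: "k0 > 0 \<and> (\<lambda>w. int k0 * f w) \<in> lap_lattice d h"
    unfolding k0_def by (rule LeastI_ex) (use ex in blast)
  define r where "r = M mod k0"
  have "int M = int (M div k0) * int k0 + int r" unfolding r_def
    by (metis div_mult_mod_eq of_nat_add of_nat_mult)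
  then have "(\<lambda>w. int r * f w) = (\<lambda>w. int M * f w - int (M div k0) * (int k0 * f w))"
    by (auto simp: algebra_simps)
  then have rin: "(\<lambda>w. int r * f w) \<in> lap_lattice d h"
    using lattice_diff[OF inM k0[THEN conjunct2]] by simp
  have "r < k0" unfolding r_def using k0 by simp
  have "r = 0"
  proof (rule ccontr)
    assume "r \<noteq> 0"
    then have "k0 \<le> r" unfolding k0_def using rin by (intro Least_le) simp
    then show False using \<open>r < k0\<close> by simp
  qed
  then show ?thesis using eo r_def by auto
qed

theorem proposition7p5:
  fixes d h :: nat
  assumes "d \<ge> 3" and "h \<ge> 1"
  shows "group_exponent d h dvd
           (d - 1) ^ h * Lcm ({d * theta d (h + 1)} \<union> theta d ` {2..h})"
proof -
  have d: "d \<ge> 3" using assms by simp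
  define S where "S = {d * theta d (h + 1)} \<union> theta d ` {2..h}"
  define L where "L = Lcm S"
  define M where "M = (d - 1) ^ h * L"
  define Md where "Md = int M"
  define D where "D = int d * (int d - 1) ^ h"
  have thpos: "th d m \<ge> 1" if "m \<ge> 1" for m using th_pos[of d m] that d by simp
  have finS: "finite S" unfolding S_def by simp
  have S0: "0 \<notin> S"
  proof
    assume "0 \<in> S"
    then consider "d * theta d (h + 1) = 0" | m where "m \<in> {2..h}" "theta d m = 0"
      unfolding S_def by auto
    then show False
    proof cases
      case 1
      then have "int (theta d (h + 1)) = 0" using d by simp
      then show False using theta_eq[OF d] thpos[of "h+1"] by simp
    next
      case 2
      then have "int (theta d m) = 0" by simp
      then show False using theta_eq[OF d] thpos[of m] 2(1) by simp
    qed
  qed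
  have Lpos: "L > 0" unfolding L_def using Lcm_0_iff[OF finS] S0 by (simp add: gr0I)
  have Mpos: "M > 0" unfolding M_def using Lpos d by simp
  have pw: "int ((d - 1) ^ h) = (int d - 1) ^ h" using d by (simp add: of_nat_diff)
  have dvdL: "int x dvd int L" if "x \<in> S" for x
    using that unfolding L_def by (simp add: dvd_Lcm)
  have hD1: "int d * th d (h + 1) dvd int L"
    using dvdL[of "d * theta d (h + 1)"] theta_eq[OF d] unfolding S_def by simp
  have hD: "D * th d (h + 1) dvd Md"
  proof -
    have e1: "D * th d (h + 1) = (int d - 1) ^ h * (int d * th d (h + 1))" unfolding D_def by (simp only: mult_ac)
    have e2: "Md = (int d - 1) ^ h * int L" unfolding Md_def M_def using pw by simp
    show ?thesis unfolding e1 e2 by (rule mult_dvd_mono[OF dvd_refl hD1])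
  qed
  have hT: "th d m dvd Md" if "2 \<le> m" "m \<le> h + 1" for m
  proof -
    have "th d m dvd int L"
    proof (cases "m = h + 1")
      case True then show ?thesis using hD1 dvd_trans by (metis dvd_triv_right)
    next
      case False
      then have "theta d m \<in> S" unfolding S_def using that by auto
      then show ?thesis using dvdL theta_eq[OF d] by metis
    qed
    then show ?thesis unfolding Md_def M_def by (simp add: dvd_mult)
  qed
  have allgood: "good d h Md u" if u: "u \<in> tvert d h" for u
  proof -
    define j where "j = length u"
    have jh: "j \<le> h" using tvert_len[OF u] j_def by simp
    have cond: "(if j = 0 then D dvd Md
           else (Md dvd Md * th d (h + 1 - j) \<and> th d (h + 2 - j) dvd Md))"
    proof (cases "j = 0")
      case True
      have "D dvd D * th d (h + 1)" by simp
      then show ?thesis using True hD dvd_trans by auto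
    next
      case False
      then show ?thesis using hT[of "h + 2 - j"] jh by auto
    qed
    show ?thesis using main_ind[OF d D_def hD hT, of j] u j_def cond by auto
  qed
  have inlat: "(\<lambda>w. int M * f w) \<in> lap_lattice d h" if f: "f \<in> ZV d h" for f
  proof -
    have "\<forall>u\<in>tvert d h. \<exists>c. lat d h c = (\<lambda>v. Md * (if v = u then 1 else 0))"
      using allgood unfolding good_def by blast
    then obtain C where C: "\<And>u. u \<in> tvert d h \<Longrightarrow> lat d h (C u) = (\<lambda>v. Md * (if v = u then 1 else 0))"
      by metis
    have "lat d h (\<lambda>v. \<Sum>u\<in>tvert d h. f u * C u v) = (\<lambda>w. int M * f w)"
    proof (rule ext)
      fix w
      have "lat d h (\<lambda>v. \<Sum>u\<in>tvert d h. f u * C u v) w = (\<Sum>u\<in>tvert d h. f u * lat d h (C u) w)"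
        by (rule lat_sum)
      also have "\<dots> = (\<Sum>u\<in>tvert d h. if w = u then f u * Md else 0)"
        using C by (intro sum.cong) auto
      also have "\<dots> = (if w \<in> tvert d h then f w * Md else 0)"
        using finite_tvert by simp
      also have "\<dots> = int M * f w" using f unfolding ZV_def Md_def by auto
      finally show "lat d h (\<lambda>v. \<Sum>u\<in>tvert d h. f u * C u v) w = int M * f w" .
    qed
    then show ?thesis unfolding lattice_eq by (metis rangeI)
  qed
  have "group_exponent d h dvd M"
    unfolding group_exponent_def
    by (rule Lcm_least) (use order_dvd[OF Mpos] inlat in auto)
  then show ?thesis unfolding M_def L_def S_def .
qed

end
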